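(* There are absolute constants $c>0$ and $C$ such that for all $n$: if $A\subseteq\{0,1\}^n$ is a uniformly random subset of size exactly $2^{n-1}$, then with probability at least $1-2^{-2^{cn}}$ there exists a bijection $\phi\colon\{0,1\}^{n-1}\to A$ such that $\Pr_{x\in\{0,1\}^{n-1}}[{\sf dist}(x,\phi(x)_{[1,\dots,n-1]})\le 1]\ge 1-C/n$.
   Context: $z_{[1,\dots,n-1]}$ denotes the restriction of $z\in\{0,1\}^n$ to its first $n-1$ coordinates; ${\sf dist}$ is Hamming distance; $x$ is uniform in $\{0,1\}^{n-1}$. *)

theory Defs
  imports Main "HOL-Library.Disjoint_Sets" Complex_Main
begin

definition cube :: "nat \<Rightarrow> bool list set" where
  "cube n = {xs. length xs = n}"

definition hamming :: "bool list \<Rightarrow> bool list \<Rightarrow> nat" where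
  "hamming xs ys = card {i. i < length xs \<and> xs ! i \<noteq> ys ! i}"

definition unif_prob :: "'a set \<Rightarrow> ('a \<Rightarrow> bool) \<Rightarrow> real" where
  "unif_prob S P = real (card {x \<in> S. P x}) / real (card S)"

definition good_matching :: "real \<Rightarrow> nat \<Rightarrow> bool list set \<Rightarrow> bool" where
  "good_matching C n A \<longleftrightarrow>
     (\<exists>\<phi>. bij_betw \<phi> (cube (n - 1)) A \<and>
        unif_prob (cube (n - 1)) (\<lambda>x. hamming x (take (n - 1) (\<phi> x)) \<le> 1) \<ge> 1 - C / real n)"

end

theory Submission
  imports Defs "HOL-Real_Asymp.Real_Asymp"
begin


lemma card_cube: "card (cube n) = 2 ^ n"
proof -
  have "cube n = {xs. set xs \<subseteq> (UNIV::bool set) \<and> length xs = n}" by (auto simp: cube_def)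
  then show ?thesis using card_lists_length_eq[of "UNIV::bool set" n] by simp
qed

lemma finite_cube[simp]: "finite (cube n)"
  by (simp add: cube_def finite_list_length)

definition Dp :: "bool list set \<Rightarrow> bool list \<Rightarrow> bool" where
  "Dp A z \<longleftrightarrow> z @ [False] \<notin> A \<and> z @ [True] \<notin> A"
definition Sp :: "bool list set \<Rightarrow> bool list \<Rightarrow> bool" where
  "Sp A z \<longleftrightarrow> z @ [False] \<in> A \<and> z @ [True] \<in> A"
definition flip :: "nat \<Rightarrow> bool list \<Rightarrow> bool list" where
  "flip j x = x[j := (\<not> x ! j)]"

fun remD :: "nat \<Rightarrow> bool list set \<Rightarrow> bool list \<Rightarrow> bool"
and remS :: "nat \<Rightarrow> bool list set \<Rightarrow> bool list \<Rightarrow> bool" where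
  "remD 0 A x = Dp A x"
| "remD (Suc j) A x = (remD j A x \<and> \<not> remS j A (flip j x))"
| "remS 0 A x = Sp A x"
| "remS (Suc j) A x = (remS j A x \<and> \<not> remD j A (flip j x))"

definition Lf :: "nat \<Rightarrow> bool list \<Rightarrow> bool list set" where
  "Lf j s = {u @ s @ [b] | u b. length u = j}"

lemma flip_app: "length u = j \<Longrightarrow> flip j (u @ c # s) = u @ (\<not> c) # s"
  by (simp add: flip_def list_update_append nth_append)

lemma Lf_Suc: "Lf (Suc j) s = Lf j (c # s) \<union> Lf j ((\<not> c) # s)"
proof
  show "Lf (Suc j) s \<subseteq> Lf j (c # s) \<union> Lf j ((\<not> c) # s)"
  proof
    fix y assume "y \<in> Lf (Suc j) s"
    then obtain u b where y: "y = u @ s @ [b]" "length u = Suc j" by (auto simp: Lf_def)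
    then obtain u' d where u: "u = u' @ [d]" by (metis length_Suc_conv_rev)
    with y have "length u' = j" by simp
    then show "y \<in> Lf j (c # s) \<union> Lf j ((\<not> c) # s)"
      using y u by (cases "d = c") (auto simp: Lf_def)
  qed
next
  show "Lf j (c # s) \<union> Lf j ((\<not> c) # s) \<subseteq> Lf (Suc j) s"
  proof
    fix y assume "y \<in> Lf j (c # s) \<union> Lf j ((\<not> c) # s)"
    then obtain u b d where "y = u @ d # s @ [b]" "length u = j" by (auto simp: Lf_def)
    then have "y = (u @ [d]) @ s @ [b]" "length (u @ [d]) = Suc j" by auto
    then show "y \<in> Lf (Suc j) s" unfolding Lf_def by blast
  qed
qed

lemma Lf_disj: "c \<noteq> d \<Longrightarrow> Lf j (c # s) \<inter> Lf j (d # s) = {}"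
  by (auto simp: Lf_def)

lemma loc: "length u = j \<Longrightarrow> A \<inter> Lf j s = A' \<inter> Lf j s \<Longrightarrow>
   remD j A (u @ s) = remD j A' (u @ s) \<and> remS j A (u @ s) = remS j A' (u @ s)"
proof (induction j arbitrary: u s A A')
  case 0
  then have "u = []" by simp
  have "s @ [False] \<in> Lf 0 s" "s @ [True] \<in> Lf 0 s" by (auto simp: Lf_def)
  then have "(s @ [False] \<in> A) = (s @ [False] \<in> A')" "(s @ [True] \<in> A) = (s @ [True] \<in> A')"
    using 0(2) by blast+
  then show ?case using \<open>u = []\<close> by (simp add: Dp_def Sp_def)
next
  case (Suc j)
  then obtain u' c where u: "u = u' @ [c]" by (metis length_Suc_conv_rev)
  with Suc have lu: "length u' = j" by simp
  have e: "u @ s = u' @ c # s" using u by simp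
  have f: "flip j (u' @ c # s) = u' @ (\<not> c) # s" using lu by (rule flip_app)
  have s1: "A \<inter> Lf j (c # s) = A' \<inter> Lf j (c # s)"
    using Suc.prems(2) Lf_Suc[of j s c] by blast
  have s2: "A \<inter> Lf j ((\<not>c) # s) = A' \<inter> Lf j ((\<not>c) # s)"
    using Suc.prems(2) Lf_Suc[of j s c] by blast
  note I1 = Suc.IH[OF lu s1] and I2 = Suc.IH[OF lu s2]
  show ?case unfolding e using I1 I2 f by simp
qed

lemma remD_mono: "remD (Suc j) A x \<Longrightarrow> remD j A x" by simp
lemma remS_mono: "remS (Suc j) A x \<Longrightarrow> remS j A x" by simp

lemma remD_le: "remD j A x \<Longrightarrow> i \<le> j \<Longrightarrow> remD i A x"
  by (induction j) (auto simp: le_Suc_eq)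
lemma remS_le: "remS j A x \<Longrightarrow> i \<le> j \<Longrightarrow> remS i A x"
  by (induction j) (auto simp: le_Suc_eq)



lemma sum_Pow_Un:
  assumes "finite X" "finite Y" "X \<inter> Y = {}"
  shows "(\<Sum>A\<in>Pow (X \<union> Y). F A) = (\<Sum>A0\<in>Pow X. \<Sum>A1\<in>Pow Y. F (A0 \<union> A1))"
proof -
  have b: "bij_betw (\<lambda>(A0, A1). A0 \<union> A1) (Pow X \<times> Pow Y) (Pow (X \<union> Y))"
  proof (rule bij_betw_byWitness[where f' = "\<lambda>A. (A \<inter> X, A \<inter> Y)"])
    show "\<forall>a\<in>Pow X \<times> Pow Y. (case (case a of (A0, A1) \<Rightarrow> A0 \<union> A1) of A \<Rightarrow> (A \<inter> X, A \<inter> Y)) = a"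
      using assms(3) by auto
    show "\<forall>a'\<in>Pow (X \<union> Y). (case (a' \<inter> X, a' \<inter> Y) of (A0, A1) \<Rightarrow> A0 \<union> A1) = a'" by auto
    show "(\<lambda>(A0, A1). A0 \<union> A1) ` (Pow X \<times> Pow Y) \<subseteq> Pow (X \<union> Y)" by auto
    show "(\<lambda>A. (A \<inter> X, A \<inter> Y)) ` Pow (X \<union> Y) \<subseteq> Pow X \<times> Pow Y" by auto
  qed
  have "(\<Sum>A\<in>Pow (X \<union> Y). F A) = (\<Sum>p\<in>Pow X \<times> Pow Y. F (case p of (A0, A1) \<Rightarrow> A0 \<union> A1))"
    using sum.reindex_bij_betw[OF b, of F] by simp
  also have "\<dots> = (\<Sum>A0\<in>Pow X. \<Sum>A1\<in>Pow Y. F (A0 \<union> A1))"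
    by (subst sum.cartesian_product) (simp add: case_prod_beta)
  finally show ?thesis .
qed

lemma finite_Lf[simp]: "finite (Lf j s)"
proof -
  have "Lf j s = (\<lambda>(u, b). u @ s @ [b]) ` ({u. length u = j} \<times> UNIV)"
    by (auto simp: Lf_def)
  then show ?thesis by (simp add: finite_list_length)
qed

fun d :: "nat \<Rightarrow> real" where
  "d 0 = 1/4"
| "d (Suc j) = d j * (1 - d j)"

definition cD :: "nat \<Rightarrow> bool list \<Rightarrow> bool list \<Rightarrow> real" where
  "cD j s u = (\<Sum>A\<in>Pow (Lf j s). of_bool (remD j A (u @ s)))"
definition cS :: "nat \<Rightarrow> bool list \<Rightarrow> bool list \<Rightarrow> real" where
  "cS j s u = (\<Sum>A\<in>Pow (Lf j s). of_bool (remS j A (u @ s)))"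

lemma sum_Pow_const: "finite X \<Longrightarrow> (\<Sum>A\<in>Pow X. (1::real)) = 2 ^ card X"
  by (simp add: card_Pow)

lemma Lf0: "Lf 0 s = {s @ [False], s @ [True]}"
  by (auto simp: Lf_def)

lemma cnt0:
  "(\<Sum>A\<in>Pow {a, b}. of_bool (a \<notin> A \<and> b \<notin> A) :: real) = 1"
  "(\<Sum>A\<in>Pow {a, b}. of_bool (a \<in> A \<and> b \<in> A) :: real) = 1"
  if "a \<noteq> b" for a b :: "bool list"
proof -
  have P: "Pow {a, b} = {{}, {a}, {b}, {a, b}}" by (auto simp: Pow_def)
  show "(\<Sum>A\<in>Pow {a, b}. of_bool (a \<notin> A \<and> b \<notin> A) :: real) = 1"
    unfolding P using that by (simp add: insert_commute)
  show "(\<Sum>A\<in>Pow {a, b}. of_bool (a \<in> A \<and> b \<in> A) :: real) = 1"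
    unfolding P using that by (simp add: insert_commute)
qed

lemma cnt_rec:
  "length u = j \<Longrightarrow> cD j s u = d j * 2 ^ card (Lf j s) \<and> cS j s u = d j * 2 ^ card (Lf j s)"
proof (induction j arbitrary: u s)
  case 0
  then have u: "u = []" by simp
  have ne: "s @ [False] \<noteq> s @ [True]" by simp
  have c: "card (Lf 0 s) = 2" unfolding Lf0 using ne by simp
  show ?case unfolding cD_def cS_def u c Lf0 using cnt0[OF ne]
    by (simp add: Dp_def Sp_def)
next
  case (Suc j)
  then obtain u' c where u: "u = u' @ [c]" by (metis length_Suc_conv_rev)
  with Suc have lu: "length u' = j" by simp
  define X where "X = Lf j (c # s)"
  define Y where "Y = Lf j ((\<not> c) # s)"
  have XY: "Lf (Suc j) s = X \<union> Y" unfolding X_def Y_def by (rule Lf_Suc)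
  have dj: "X \<inter> Y = {}" unfolding X_def Y_def by (rule Lf_disj) simp
  have fX: "finite X" "finite Y" unfolding X_def Y_def by simp_all
  have e: "u @ s = u' @ c # s" using u by simp
  have f: "flip j (u' @ c # s) = u' @ (\<not> c) # s" using lu by (rule flip_app)
  have cXY: "card (X \<union> Y) = card X + card Y" using card_Un_disjoint[OF fX dj] .
  have lX: "remD j (A0 \<union> A1) (u' @ c # s) = remD j A0 (u' @ c # s) \<and>
            remS j (A0 \<union> A1) (u' @ c # s) = remS j A0 (u' @ c # s)"
    if "A0 \<subseteq> X" "A1 \<subseteq> Y" for A0 A1
    by (rule loc[OF lu]) (use that dj in \<open>auto simp: X_def\<close>)
  have lY: "remD j (A0 \<union> A1) (u' @ (\<not>c) # s) = remD j A1 (u' @ (\<not>c) # s) \<and>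
            remS j (A0 \<union> A1) (u' @ (\<not>c) # s) = remS j A1 (u' @ (\<not>c) # s)"
    if "A0 \<subseteq> X" "A1 \<subseteq> Y" for A0 A1
    by (rule loc[OF lu]) (use that dj in \<open>auto simp: Y_def\<close>)
  have IX: "cD j (c # s) u' = d j * 2 ^ card X" "cS j (c # s) u' = d j * 2 ^ card X"
    using Suc.IH[OF lu, of "c # s"] by (auto simp: X_def)
  have IY: "cD j ((\<not>c) # s) u' = d j * 2 ^ card Y" "cS j ((\<not>c) # s) u' = d j * 2 ^ card Y"
    using Suc.IH[OF lu, of "(\<not>c) # s"] by (auto simp: Y_def)
  have cY1: "(\<Sum>A1\<in>Pow Y. 1 - of_bool (remS j A1 (u' @ (\<not>c) # s)) :: real) = 2 ^ card Y - d j * 2 ^ card Y"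
    using IY(2) fX(2) unfolding cS_def Y_def[symmetric] by (simp add: sum_subtractf card_Pow)
  have cY2: "(\<Sum>A1\<in>Pow Y. 1 - of_bool (remD j A1 (u' @ (\<not>c) # s)) :: real) = 2 ^ card Y - d j * 2 ^ card Y"
    using IY(1) fX(2) unfolding cD_def Y_def[symmetric] by (simp add: sum_subtractf card_Pow)
  have kcD: "of_bool (remD (Suc j) (A0 \<union> A1) (u' @ c # s)) =
       of_bool (remD j A0 (u' @ c # s)) * (1 - of_bool (remS j A1 (u' @ (\<not>c) # s)) :: real)"
    if "A0 \<in> Pow X" "A1 \<in> Pow Y" for A0 A1
    using lX[of A0 A1] lY[of A0 A1] that f by simp
  have "cD (Suc j) s u = (\<Sum>A\<in>Pow (X \<union> Y). of_bool (remD (Suc j) A (u' @ c # s)))"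
    unfolding cD_def XY e ..
  also have "\<dots> = (\<Sum>A0\<in>Pow X. \<Sum>A1\<in>Pow Y. of_bool (remD (Suc j) (A0 \<union> A1) (u' @ c # s)))"
    by (rule sum_Pow_Un[OF fX dj])
  also have "\<dots> = (\<Sum>A0\<in>Pow X. \<Sum>A1\<in>Pow Y.
       of_bool (remD j A0 (u' @ c # s)) * (1 - of_bool (remS j A1 (u' @ (\<not>c) # s))))"
    by (intro sum.cong refl kcD)
  also have "\<dots> = cD j (c # s) u' * (2 ^ card Y - d j * 2 ^ card Y)"
    unfolding cD_def X_def[symmetric] by (simp add: sum_distrib_left[symmetric] sum_distrib_right cY1)
  finally have r1: "cD (Suc j) s u = d (Suc j) * 2 ^ card (Lf (Suc j) s)"
    using IX XY cXY by (simp add: power_add algebra_simps)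
  have kcS: "of_bool (remS (Suc j) (A0 \<union> A1) (u' @ c # s)) =
       of_bool (remS j A0 (u' @ c # s)) * (1 - of_bool (remD j A1 (u' @ (\<not>c) # s)) :: real)"
    if "A0 \<in> Pow X" "A1 \<in> Pow Y" for A0 A1
    using lX[of A0 A1] lY[of A0 A1] that f by simp
  have "cS (Suc j) s u = (\<Sum>A\<in>Pow (X \<union> Y). of_bool (remS (Suc j) A (u' @ c # s)))"
    unfolding cS_def XY e ..
  also have "\<dots> = (\<Sum>A0\<in>Pow X. \<Sum>A1\<in>Pow Y. of_bool (remS (Suc j) (A0 \<union> A1) (u' @ c # s)))"
    by (rule sum_Pow_Un[OF fX dj])
  also have "\<dots> = (\<Sum>A0\<in>Pow X. \<Sum>A1\<in>Pow Y.
       of_bool (remS j A0 (u' @ c # s)) * (1 - of_bool (remD j A1 (u' @ (\<not>c) # s))))"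
    by (intro sum.cong refl kcS)
  also have "\<dots> = cS j (c # s) u' * (2 ^ card Y - d j * 2 ^ card Y)"
    unfolding cS_def X_def[symmetric] by (simp add: sum_distrib_left[symmetric] sum_distrib_right cY2)
  finally have r2: "cS (Suc j) s u = d (Suc j) * 2 ^ card (Lf (Suc j) s)"
    using IX XY cXY by (simp add: power_add algebra_simps)
  show ?case using r1 r2 by simp
qed

lemma d_bounds: "0 \<le> d j \<and> d j \<le> 1 / (real j + 4)"
proof (induction j)
  case 0 then show ?case by simp
next
  case (Suc j)
  then have a: "0 \<le> d j" "d j \<le> 1 / (real j + 4)" by auto
  have b: "1 / (real j + 4) \<le> 1/4" by (simp add: field_simps)
  have b2: "1 / (real j + 4) + d j \<le> 1" using a b by linarith
  have "d j * (1 - d j) \<le> (1 / (real j + 4)) * (1 - 1 / (real j + 4))"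
  proof -
    let ?y = "1 / (real j + 4)"
    have "?y * (1 - ?y) - d j * (1 - d j) = (?y - d j) * (1 - ?y - d j)" by (simp add: algebra_simps)
    also have "\<dots> \<ge> 0" using a b b2 by (intro mult_nonneg_nonneg) auto
    finally show ?thesis by (simp add: add.commute)
  qed
  also have "\<dots> \<le> 1 / (real (Suc j) + 4)"
  proof -
    have p: "0 < real j + 4" by simp
    have "(1 / (real j + 4)) * (1 - 1 / (real j + 4)) = (real j + 3) / ((real j + 4) * (real j + 4))"
      using p by (simp add: field_simps)
    also have "\<dots> \<le> 1 / (real j + 5)"
      using p by (simp add: divide_le_eq le_divide_eq algebra_simps) (simp add: add_nonneg_nonneg not_less)
    finally show ?thesis by (simp add: add.commute)
  qed
  moreover have "0 \<le> d j * (1 - d j)" using a b b2 by (intro mult_nonneg_nonneg) auto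
  ultimately show ?case by (simp add: add.commute)
qed



lemma prod_factor:
  fixes g :: "'i \<Rightarrow> 'a set \<Rightarrow> real"
  assumes "finite I" "\<forall>i\<in>I. finite (L i)"
    "\<forall>i\<in>I. \<forall>j\<in>I. i \<noteq> j \<longrightarrow> L i \<inter> L j = {}"
    "\<forall>i\<in>I. \<forall>A. g i A = g i (A \<inter> L i)"
  shows "(\<Sum>A\<in>Pow (\<Union>i\<in>I. L i). \<Prod>i\<in>I. g i A) = (\<Prod>i\<in>I. \<Sum>A\<in>Pow (L i). g i A)"
  using assms
proof (induction I rule: finite_induct)
  case empty
  show ?case by simp
next
  case (insert i I)
  define U where "U = (\<Union>k\<in>I. L k)"
  have fU: "finite U" using insert.hyps(1) insert.prems(1) unfolding U_def by blast
  have fi: "finite (L i)" using insert.prems(1) by blast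
  have dj: "L i \<inter> U = {}"
  proof -
    have "L i \<inter> L k = {}" if "k \<in> I" for k
    proof -
      have "i \<noteq> k" using that insert.hyps(2) by blast
      then show ?thesis using insert.prems(2) that by blast
    qed
    then show ?thesis unfolding U_def by blast
  qed
  have IH: "(\<Sum>A\<in>Pow U. \<Prod>k\<in>I. g k A) = (\<Prod>k\<in>I. \<Sum>A\<in>Pow (L k). g k A)"
    unfolding U_def by (rule insert.IH) (use insert.prems in \<open>blast+\<close>)
  have gi: "g i (A0 \<union> A1) = g i A0" if "A0 \<subseteq> L i" "A1 \<subseteq> U" for A0 A1
  proof -
    have "(A0 \<union> A1) \<inter> L i = A0 \<inter> L i" using that dj by blast
    moreover have "\<forall>A. g i A = g i (A \<inter> L i)" using insert.prems(3) by blast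
    ultimately show ?thesis by (metis (no_types))
  qed
  have gk: "g k (A0 \<union> A1) = g k A1" if "A0 \<subseteq> L i" "k \<in> I" for A0 A1 k
  proof -
    have "i \<noteq> k" using that insert.hyps(2) by blast
    then have "L i \<inter> L k = {}" using insert.prems(2) that by blast
    then have "(A0 \<union> A1) \<inter> L k = A1 \<inter> L k" using that by blast
    moreover have "\<forall>A. g k A = g k (A \<inter> L k)" using insert.prems(3) that by blast
    ultimately show ?thesis by (metis (no_types))
  qed
  have "(\<Sum>A\<in>Pow (\<Union>k\<in>insert i I. L k). \<Prod>k\<in>insert i I. g k A)
      = (\<Sum>A\<in>Pow (L i \<union> U). g i A * (\<Prod>k\<in>I. g k A))"
    using insert.hyps by (simp add: U_def)
  also have "\<dots> = (\<Sum>A0\<in>Pow (L i). \<Sum>A1\<in>Pow U. g i (A0 \<union> A1) * (\<Prod>k\<in>I. g k (A0 \<union> A1)))"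
    by (rule sum_Pow_Un[OF fi fU dj])
  also have "\<dots> = (\<Sum>A0\<in>Pow (L i). \<Sum>A1\<in>Pow U. g i A0 * (\<Prod>k\<in>I. g k A1))"
    by (intro sum.cong refl) (simp add: gi gk cong: prod.cong)
  also have "\<dots> = (\<Sum>A0\<in>Pow (L i). g i A0) * (\<Sum>A1\<in>Pow U. \<Prod>k\<in>I. g k A1)"
    by (simp add: sum_product)
  also have "\<dots> = (\<Prod>k\<in>insert i I. \<Sum>A\<in>Pow (L k). g k A)"
    using IH insert.hyps by simp
  finally show ?case .
qed

lemma app_bij: "t \<le> m \<Longrightarrow> bij_betw (\<lambda>(u, s). u @ s) (cube t \<times> cube (m - t)) (cube m)"
proof (rule bij_betw_byWitness[where f' = "\<lambda>x. (take t x, drop t x)"])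
  assume tm: "t \<le> m"
  show "\<forall>a\<in>cube t \<times> cube (m - t). (\<lambda>x. (take t x, drop t x)) ((\<lambda>(u, s). u @ s) a) = a"
    by (auto simp: cube_def)
  show "\<forall>a'\<in>cube m. (\<lambda>(u, s). u @ s) (take t a', drop t a') = a'" by simp
  show "(\<lambda>(u, s). u @ s) ` (cube t \<times> cube (m - t)) \<subseteq> cube m"
    using tm by (auto simp: cube_def)
  show "(\<lambda>x. (take t x, drop t x)) ` cube m \<subseteq> cube t \<times> cube (m - t)"
    using tm by (auto simp: cube_def)
qed

lemma cube_Suc_Un: "t \<le> m \<Longrightarrow> cube (Suc m) = (\<Union>s\<in>cube (m - t). Lf t s)"
proof
  assume tm: "t \<le> m"
  show "cube (Suc m) \<subseteq> (\<Union>s\<in>cube (m - t). Lf t s)"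
  proof
    fix y assume "y \<in> cube (Suc m)"
    then have l: "length y = Suc m" by (simp add: cube_def)
    then obtain x b where y: "y = x @ [b]" by (metis length_Suc_conv_rev)
    with l have lx: "length x = m" by simp
    have "y = take t x @ drop t x @ [b]" using y by simp
    moreover have "drop t x \<in> cube (m - t)" using lx by (simp add: cube_def)
    moreover have "length (take t x) = t" using lx tm by simp
    ultimately show "y \<in> (\<Union>s\<in>cube (m - t). Lf t s)" unfolding Lf_def by blast
  qed
next
  assume tm: "t \<le> m"
  show "(\<Union>s\<in>cube (m - t). Lf t s) \<subseteq> cube (Suc m)"
    using tm by (auto simp: Lf_def cube_def)
qed

lemma Lf_disj2: "length s = length s' \<Longrightarrow> s \<noteq> s' \<Longrightarrow> Lf t s \<inter> Lf t s' = {}"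
proof (rule ccontr)
  assume l: "length s = length s'" and ne: "s \<noteq> s'" and "Lf t s \<inter> Lf t s' \<noteq> {}"
  then obtain u b u' b' where e: "u @ s @ [b] = u' @ s' @ [b']" "length u = t" "length u' = t"
    unfolding Lf_def by blast
  then have "s @ [b] = s' @ [b']" by (simp add: append_eq_append_conv)
  then show False using ne l by simp
qed

definition Yv :: "nat \<Rightarrow> bool list \<Rightarrow> bool list set \<Rightarrow> real" where
  "Yv t s A = real (card {u \<in> cube t. remD t A (u @ s)}) / 2 ^ t"

lemma Yv_loc: "Yv t s A = Yv t s (A \<inter> Lf t s)"
proof -
  have "remD t A (u @ s) = remD t (A \<inter> Lf t s) (u @ s)" if "u \<in> cube t" for u
    using loc[of u t A s "A \<inter> Lf t s"] that by (auto simp: cube_def)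
  then show ?thesis unfolding Yv_def by (metis (mono_tags, lifting) mem_Collect_eq)
qed

lemma Yv_bounds: "0 \<le> Yv t s A \<and> Yv t s A \<le> 1"
proof -
  have "card {u \<in> cube t. remD t A (u @ s)} \<le> card (cube t)" by (intro card_mono) auto
  then show ?thesis unfolding Yv_def card_cube by simp
qed

lemma card_filter_sum: "finite S \<Longrightarrow> real (card {u \<in> S. P u}) = (\<Sum>u\<in>S. of_bool (P u))"
  by (simp add: sum.If_cases Int_def)

lemma Yv_exp: "(\<Sum>A\<in>Pow (Lf t s). Yv t s A) = d t * 2 ^ card (Lf t s)"
proof -
  have "(\<Sum>A\<in>Pow (Lf t s). Yv t s A) = (\<Sum>A\<in>Pow (Lf t s). \<Sum>u\<in>cube t. of_bool (remD t A (u @ s))) / 2 ^ t"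
    unfolding Yv_def by (simp add: card_filter_sum sum_divide_distrib)
  also have "\<dots> = (\<Sum>u\<in>cube t. cD t s u) / 2 ^ t"
    unfolding cD_def by (subst sum.swap) simp
  also have "\<dots> = (\<Sum>u\<in>cube t. d t * 2 ^ card (Lf t s)) / 2 ^ t"
    using cnt_rec by (intro arg_cong[where f = "\<lambda>x. x / 2 ^ t"] sum.cong refl) (auto simp: cube_def)
  also have "\<dots> = d t * 2 ^ card (Lf t s)" by (simp add: card_cube)
  finally show ?thesis .
qed

lemma chernoff:
  assumes tm: "t \<le> m"
  shows "real (card {A \<in> Pow (cube (Suc m)). a \<le> (\<Sum>s\<in>cube (m - t). Yv t s A)})
     \<le> 2 ^ card (cube (Suc m)) * exp (d t * 2 ^ (m - t) - a / 2)"
proof -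
  let ?I = "cube (m - t)"
  let ?Y = "\<lambda>A. \<Sum>s\<in>?I. Yv t s A"
  let ?Bad = "{A \<in> Pow (cube (Suc m)). a \<le> ?Y A}"
  have U: "cube (Suc m) = (\<Union>s\<in>?I. Lf t s)" by (rule cube_Suc_Un[OF tm])
  have dj: "\<forall>i\<in>?I. \<forall>j\<in>?I. i \<noteq> j \<longrightarrow> Lf t i \<inter> Lf t j = {}"
    by (auto simp: cube_def intro!: Lf_disj2)
  have F1: "(\<Sum>A\<in>Pow (cube (Suc m)). \<Prod>s\<in>?I. exp (Yv t s A / 2)) =
        (\<Prod>s\<in>?I. \<Sum>A\<in>Pow (Lf t s). exp (Yv t s A / 2))"
    unfolding U by (rule prod_factor) (use dj Yv_loc in auto)
  have F2: "(\<Sum>A\<in>Pow (cube (Suc m)). \<Prod>s\<in>?I. (1::real)) = (\<Prod>s\<in>?I. \<Sum>A\<in>Pow (Lf t s). 1)"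
    unfolding U by (rule prod_factor) (use dj in auto)
  have P: "(\<Prod>s\<in>?I. (2::real) ^ card (Lf t s)) = 2 ^ card (cube (Suc m))"
    using F2 by (simp add: card_Pow)
  have blk: "(\<Sum>A\<in>Pow (Lf t s). exp (Yv t s A / 2)) \<le> 2 ^ card (Lf t s) * (1 + d t)" for s
  proof -
    have "(\<Sum>A\<in>Pow (Lf t s). exp (Yv t s A / 2)) \<le> (\<Sum>A\<in>Pow (Lf t s). 1 + Yv t s A)"
    proof (rule sum_mono)
      fix A
      have "exp (Yv t s A / 2) \<le> 1 + 2 * (Yv t s A / 2)"
        using Yv_bounds[of t s A] by (intro real_exp_bound_lemma) auto
      then show "exp (Yv t s A / 2) \<le> 1 + Yv t s A" by simp
    qed
    also have "\<dots> = 2 ^ card (Lf t s) * (1 + d t)"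
      by (simp add: sum.distrib Yv_exp card_Pow algebra_simps)
    finally show ?thesis .
  qed
  have "real (card ?Bad) * exp (a / 2) = (\<Sum>A\<in>?Bad. exp (a / 2))" by simp
  also have "\<dots> \<le> (\<Sum>A\<in>?Bad. exp (?Y A / 2))"
    by (intro sum_mono) auto
  also have "\<dots> \<le> (\<Sum>A\<in>Pow (cube (Suc m)). exp (?Y A / 2))"
    by (intro sum_mono2) auto
  also have "\<dots> = (\<Sum>A\<in>Pow (cube (Suc m)). \<Prod>s\<in>?I. exp (Yv t s A / 2))"
    by (simp add: sum_divide_distrib exp_sum)
  also have "\<dots> = (\<Prod>s\<in>?I. \<Sum>A\<in>Pow (Lf t s). exp (Yv t s A / 2))" by (rule F1)
  also have "\<dots> \<le> (\<Prod>s\<in>?I. 2 ^ card (Lf t s) * (1 + d t))"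
    by (intro prod_mono) (auto intro: blk sum_nonneg)
  also have "\<dots> = 2 ^ card (cube (Suc m)) * (1 + d t) ^ (2 ^ (m - t))"
    by (simp add: prod.distrib P card_cube)
  also have "\<dots> \<le> 2 ^ card (cube (Suc m)) * exp (d t) ^ (2 ^ (m - t))"
    using d_bounds[of t] by (intro mult_left_mono power_mono) (auto simp: add.commute exp_ge_add_one_self)
  also have "\<dots> = 2 ^ card (cube (Suc m)) * exp (d t * 2 ^ (m - t))"
    by (simp add: exp_of_nat_mult[symmetric] mult.commute)
  finally have "real (card ?Bad) * exp (a / 2) \<le> 2 ^ card (cube (Suc m)) * exp (d t * 2 ^ (m - t))" .
  then have "real (card ?Bad) \<le> 2 ^ card (cube (Suc m)) * exp (d t * 2 ^ (m - t)) / exp (a / 2)"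
    by (simp add: le_divide_eq)
  also have "\<dots> = 2 ^ card (cube (Suc m)) * exp (d t * 2 ^ (m - t) - a / 2)"
    by (simp add: exp_diff)
  finally show ?thesis .
qed



lemma extend_bij:
  assumes "finite X" "finite Y" "card X = card Y" "G \<subseteq> X" "inj_on f G" "f ` G \<subseteq> Y"
  shows "\<exists>g. bij_betw g X Y \<and> (\<forall>x\<in>G. g x = f x)"
proof -
  have fG: "finite G" by (rule finite_subset[OF assms(4,1)])
  have cG: "card (f ` G) = card G" using assms(5) by (rule card_image)
  have "card (X - G) = card (Y - f ` G)"
    using assms cG fG by (simp add: card_Diff_subset finite_subset)
  then obtain h where h: "bij_betw h (X - G) (Y - f ` G)"
    using finite_same_card_bij assms(1,2) by (metis finite_Diff)
  define g where "g x = (if x \<in> G then f x else h x)" for x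
  have b1: "bij_betw g G (f ` G)"
    using assms(5) by (simp add: bij_betw_def g_def inj_on_def image_def)
  have b2: "bij_betw g (X - G) (Y - f ` G)"
    using h by (rule bij_betw_cong[THEN iffD1, rotated]) (simp add: g_def)
  have "bij_betw g (G \<union> (X - G)) (f ` G \<union> (Y - f ` G))"
    by (rule bij_betw_combine[OF b1 b2]) blast
  moreover have "G \<union> (X - G) = X" "f ` G \<union> (Y - f ` G) = Y" using assms(4,6) by blast+
  ultimately show ?thesis by (auto simp: g_def)
qed

lemma hamming_self: "hamming x x = 0" by (simp add: hamming_def)

lemma hamming_flip: "j < length x \<Longrightarrow> hamming x (flip j x) = 1"
proof -
  assume j: "j < length x"
  have "{i. i < length x \<and> x ! i \<noteq> flip j x ! i} = {j}"
    using j by (auto simp: flip_def nth_list_update)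
  then show ?thesis by (simp add: hamming_def)
qed

lemma length_flip[simp]: "length (flip j x) = length x" by (simp add: flip_def)
lemma flip_flip[simp]: "flip j (flip j x) = x"
  by (cases "j < length x") (simp_all add: flip_def list_update_beyond)

lemma matching:
  assumes A: "A \<subseteq> cube (Suc m)" "card A = 2 ^ m" and tm: "t \<le> m"
  shows "\<exists>\<phi>. bij_betw \<phi> (cube m) A \<and>
     unif_prob (cube m) (\<lambda>x. hamming x (take m (\<phi> x)) \<le> 1)
       \<ge> 1 - real (card {x \<in> cube m. remD t A x}) / 2 ^ m"
proof -
  define own where "own x = (if x @ [False] \<in> A then x @ [False] else x @ [True])" for x
  define jj where "jj x = (LEAST j. \<not> remD (Suc j) A x)" for x
  define f where "f x = (if \<not> Dp A x then own x else flip (jj x) x @ [True])" for x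
  define G where "G = {x \<in> cube m. \<not> remD t A x}"
  have own_in: "own x \<in> A" if "\<not> Dp A x" for x using that by (auto simp: own_def Dp_def)
  have jjD: "jj x < t \<and> remD (jj x) A x \<and> remS (jj x) A (flip (jj x) x) \<and> \<not> remD (Suc (jj x)) A x"
    if "x \<in> G" "Dp A x" for x
  proof -
    have r0: "remD 0 A x" using that by simp
    have nt: "\<not> remD t A x" using that by (simp add: G_def)
    have t0: "t \<noteq> 0"
    proof
      assume "t = 0" with nt r0 show False by simp
    qed
    then have ex: "\<not> remD (Suc (t - 1)) A x" using nt by simp
    have n1: "\<not> remD (Suc (jj x)) A x" unfolding jj_def by (rule LeastI[of _ "t - 1"]) (rule ex)
    have lt: "jj x \<le> t - 1" unfolding jj_def by (rule Least_le) (rule ex)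
    have r: "remD (jj x) A x"
    proof (cases "jj x")
      case 0 then show ?thesis using r0 by simp
    next
      case (Suc k)
      then have "k < jj x" by simp
      then have "\<not> \<not> remD (Suc k) A x" unfolding jj_def by (rule not_less_Least)
      then show ?thesis using Suc by simp
    qed
    then show ?thesis using n1 lt t0 by auto
  qed
  have lenG: "length x = m" if "x \<in> G" for x using that by (simp add: G_def cube_def)
  have f_in: "f x \<in> A" if "x \<in> G" for x
  proof (cases "Dp A x")
    case False then show ?thesis using own_in by (simp add: f_def)
  next
    case True
    with jjD[OF that] have "remS (jj x) A (flip (jj x) x)" by simp
    then have "Sp A (flip (jj x) x)" using remS_le[of "jj x" A _ 0] by simp
    then show ?thesis using True by (simp add: f_def Sp_def)
  qed
  have f_ham: "hamming x (take m (f x)) \<le> 1" if "x \<in> G" for x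
  proof (cases "Dp A x")
    case False then show ?thesis using lenG[OF that] by (simp add: f_def own_def hamming_self)
  next
    case True
    have "jj x < m" using jjD[OF that True] tm by simp
    then show ?thesis using True lenG[OF that] by (simp add: f_def hamming_flip)
  qed
  have stop: "\<not> remS (Suc j) A z" if "remD j A (flip j z)" for j z
    using that by simp
  have f_inj: "inj_on f G"
  proof (rule inj_onI)
    fix x y assume xG: "x \<in> G" and yG: "y \<in> G" and e: "f x = f y"
    have lx: "length x = m" "length y = m" using lenG xG yG by auto
    show "x = y"
    proof (cases "Dp A x"; cases "Dp A y")
      assume "\<not> Dp A x" "\<not> Dp A y"
      then have "own x = own y" using e by (simp add: f_def)
      then show ?thesis by (auto simp: own_def split: if_splits)
    next
      assume nx: "\<not> Dp A x" and dy: "Dp A y"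
      let ?z = "flip (jj y) y"
      have "Sp A ?z" using jjD[OF yG dy] remS_le[of "jj y" A ?z 0] by simp
      moreover have "own x = ?z @ [True]" using e nx dy by (simp add: f_def)
      ultimately show ?thesis by (auto simp: own_def Sp_def split: if_splits)
    next
      assume dx: "Dp A x" and ny: "\<not> Dp A y"
      let ?z = "flip (jj x) x"
      have "Sp A ?z" using jjD[OF xG dx] remS_le[of "jj x" A ?z 0] by simp
      moreover have "own y = ?z @ [True]" using e ny dx by (simp add: f_def)
      ultimately show ?thesis by (auto simp: own_def Sp_def split: if_splits)
    next
      assume dx: "Dp A x" and dy: "Dp A y"
      then have z: "flip (jj x) x = flip (jj y) y" using e by (simp add: f_def)
      define z where "z = flip (jj x) x"
      have x1: "remS (jj x) A z" "\<not> remS (Suc (jj x)) A z"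
        using jjD[OF xG dx] unfolding z_def by auto
      have y1: "remS (jj y) A z" "\<not> remS (Suc (jj y)) A z"
        using jjD[OF yG dy] z unfolding z_def by auto
      have "jj x = jj y"
      proof (rule ccontr)
        assume "jj x \<noteq> jj y"
        then consider "Suc (jj x) \<le> jj y" | "Suc (jj y) \<le> jj x" by linarith
        then show False
        proof cases
          case 1 then show False using remS_le[OF y1(1) 1] x1(2) by simp
        next
          case 2 then show False using remS_le[OF x1(1) 2] y1(2) by simp
        qed
      qed
      then show ?thesis using z by (metis flip_flip)
    qed
  qed
  have GX: "G \<subseteq> cube m" by (auto simp: G_def)
  have cA: "card (cube m) = card A" using A by (simp add: card_cube)
  have fA: "finite A" by (rule finite_subset[OF A(1) finite_cube])
  obtain \<phi> where phi: "bij_betw \<phi> (cube m) A" "\<forall>x\<in>G. \<phi> x = f x"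
    using extend_bij[OF finite_cube fA cA GX f_inj] f_in by blast
  have sub: "G \<subseteq> {x \<in> cube m. hamming x (take m (\<phi> x)) \<le> 1}"
    using phi(2) f_ham GX by auto
  have cG: "card G = 2 ^ m - card {x \<in> cube m. remD t A x}"
  proof -
    have "G = cube m - {x \<in> cube m. remD t A x}" by (auto simp: G_def)
    then show ?thesis by (simp add: card_Diff_subset card_cube)
  qed
  have le: "card {x \<in> cube m. remD t A x} \<le> 2 ^ m"
    by (metis (no_types, lifting) card_cube card_mono finite_cube mem_Collect_eq subsetI)
  have "real (card G) \<le> real (card {x \<in> cube m. hamming x (take m (\<phi> x)) \<le> 1})"
    using card_mono[OF _ sub] by simp
  then have h: "(2::real) ^ m - real (card {x \<in> cube m. remD t A x})
      \<le> real (card {x \<in> cube m. hamming x (take m (\<phi> x)) \<le> 1})"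
    using cG le by (simp add: of_nat_diff)
  have "1 - real (card {x \<in> cube m. remD t A x}) / 2 ^ m
     = ((2::real) ^ m - real (card {x \<in> cube m. remD t A x})) / 2 ^ m"
    by (simp add: diff_divide_distrib)
  also have "\<dots> \<le> real (card {x \<in> cube m. hamming x (take m (\<phi> x)) \<le> 1}) / 2 ^ m"
    by (rule divide_right_mono[OF h]) simp
  finally have "1 - real (card {x \<in> cube m. remD t A x}) / 2 ^ m
      \<le> unif_prob (cube m) (\<lambda>x. hamming x (take m (\<phi> x)) \<le> 1)"
    unfolding unif_prob_def card_cube by simp
  then show ?thesis using phi(1) by blast
qed



lemma card_bad_sum:
  assumes "t \<le> m"
  shows "real (card {x \<in> cube m. remD t A x}) = 2 ^ t * (\<Sum>s\<in>cube (m - t). Yv t s A)"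
proof -
  have "real (card {x \<in> cube m. remD t A x}) = (\<Sum>x\<in>cube m. of_bool (remD t A x))"
    by (simp add: card_filter_sum)
  also have "\<dots> = (\<Sum>p\<in>cube t \<times> cube (m - t). of_bool (remD t A (case p of (u, s) \<Rightarrow> u @ s)))"
    using sum.reindex_bij_betw[OF app_bij[OF assms], of "\<lambda>x. of_bool (remD t A x) :: real"]
    by simp
  also have "\<dots> = (\<Sum>u\<in>cube t. \<Sum>s\<in>cube (m - t). of_bool (remD t A (u @ s)))"
    by (subst sum.cartesian_product) (simp add: case_prod_beta)
  also have "\<dots> = (\<Sum>s\<in>cube (m - t). \<Sum>u\<in>cube t. of_bool (remD t A (u @ s)))"
    by (rule sum.swap)
  also have "\<dots> = (\<Sum>s\<in>cube (m - t). 2 ^ t * Yv t s A)"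
    by (intro sum.cong refl) (simp add: Yv_def card_filter_sum)
  finally show ?thesis by (simp add: sum_distrib_left)
qed

lemma central_binom: "(2::real) ^ K \<le> real (K + 1) * real (K choose (K div 2))"
proof -
  have "(2::real) ^ K = real (\<Sum>k\<le>K. K choose k)" by (simp add: choose_row_sum)
  also have "\<dots> \<le> real (\<Sum>k\<le>K. K choose (K div 2))"
    by (intro of_nat_mono sum_mono binomial_maximum)
  also have "\<dots> = real (K + 1) * real (K choose (K div 2))" by (simp add: algebra_simps)
  finally show ?thesis .
qed

lemma asym: "\<exists>N0::real. \<forall>x\<ge>N0. (2 powr x + 1) * exp (- (2 powr ((x-1)/2) / (x+4))) \<le> 2 powr (-(2 powr (x/4)))"
proof -
  have lim: "((\<lambda>x::real. (2 powr x + 1) * exp (- (2 powr ((x-1)/2) / (x+4))) / 2 powr (-(2 powr (x/4)))) \<longlongrightarrow> 0) at_top"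
    by real_asymp
  have "\<forall>\<^sub>F x::real in at_top. (2 powr x + 1) * exp (- (2 powr ((x-1)/2) / (x+4))) / 2 powr (-(2 powr (x/4))) < 1"
    using order_tendstoD(2)[OF lim, of 1] by simp
  then have "\<forall>\<^sub>F x::real in at_top. (2 powr x + 1) * exp (- (2 powr ((x-1)/2) / (x+4))) \<le> 2 powr (-(2 powr (x/4)))"
    by eventually_elim (simp add: divide_less_eq)
  then show ?thesis by (simp add: eventually_at_top_linorder)
qed



theorem mainTheorem10:
  shows "\<exists>(c::real) (C::real). c > 0 \<and> (\<forall>n::nat. n \<ge> 1 \<longrightarrow>
     unif_prob {A. A \<subseteq> cube n \<and> card A = 2 ^ (n - 1)} (good_matching C n)
       \<ge> 1 - 2 powr (- (2 powr (c * real n))))"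
proof -
  obtain N0 :: real where N0: "\<And>x. x \<ge> N0 \<Longrightarrow> (2 powr x + 1) * exp (- (2 powr ((x-1)/2) / (x+4))) \<le> 2 powr (-(2 powr (x/4)))"
    using asym by blast
  define n0 :: nat where "n0 = nat \<lceil>N0\<rceil> + 8"
  define C where "C = real n0"
  have C8: "C \<ge> 8" by (simp add: C_def n0_def)
  have CN0: "C \<ge> N0" unfolding C_def n0_def by linarith
  show ?thesis
  proof (intro exI conjI allI impI)
    show "(1/4::real) > 0" by simp
    fix n :: nat assume n1: "n \<ge> 1"
    define S where "S = {A. A \<subseteq> cube n \<and> card A = 2 ^ (n - 1)}"
    have finS: "finite S" unfolding S_def by (rule finite_subset[of _ "Pow (cube n)"]) auto
    have cardS: "card S = 2 ^ n choose 2 ^ (n - 1)"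
      unfolding S_def using n_subsets[OF finite_cube, of n "2 ^ (n - 1)"] by (simp add: card_cube)
    have le2: "(2::nat) ^ (n - 1) \<le> 2 ^ n" by (simp add: power_increasing)
    have Spos: "card S > 0" unfolding cardS using le2 by (simp add: zero_less_binomial)
    have RHS1: "1 - 2 powr (- (2 powr (1/4 * real n))) \<le> (1::real)" by simp
    show "1 - 2 powr (- (2 powr (1/4 * real n))) \<le> unif_prob S (good_matching C n)"
    proof (cases "real n \<le> C")
      case True
      have allg: "good_matching C n A" if "A \<in> S" for A
      proof -
        have fA: "finite A" using that finite_subset[OF _ finite_cube] by (auto simp: S_def)
        have "card (cube (n - 1)) = card A" using that by (simp add: S_def card_cube)
        then obtain \<phi> where phi: "bij_betw \<phi> (cube (n - 1)) A"
          using finite_same_card_bij[OF finite_cube fA] by blast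
        have "1 - C / real n \<le> 0" using True n1 by (simp add: field_simps)
        also have "0 \<le> unif_prob (cube (n - 1)) (\<lambda>x. hamming x (take (n - 1) (\<phi> x)) \<le> 1)"
          by (simp add: unif_prob_def)
        finally show ?thesis unfolding good_matching_def using phi by blast
      qed
      then have "{A \<in> S. good_matching C n A} = S" by blast
      then have "unif_prob S (good_matching C n) = 1" using Spos by (simp add: unif_prob_def)
      then show ?thesis using RHS1 by simp
    next
      case False
      then have nC: "real n > C" by simp
      obtain m where nm: "n = Suc m" using n1 by (cases n) auto
      define t where "t = m div 2"
      define B where "B = (2::nat) ^ (m - t)"
      define a where "a = 4 * real B / (real t + 4)"
      have tm: "t \<le> m" by (simp add: t_def)
      have Bt: "(2::real) ^ t * real B = 2 ^ m"
        using tm by (simp add: B_def power_add[symmetric])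
      have t2: "real n \<le> 2 * (real t + 4)"
      proof -
        have "Suc m \<le> 2 * (m div 2 + 4)" by presburger
        then have "real (Suc m) \<le> real (2 * (m div 2 + 4))" by (simp only: of_nat_le_iff)
        then show ?thesis unfolding nm t_def by simp
      qed
      have good: "good_matching C n A" if "A \<in> S" "\<not> a \<le> (\<Sum>s\<in>cube (m - t). Yv t s A)" for A
      proof -
        have AS: "A \<subseteq> cube (Suc m)" "card A = 2 ^ m" using that(1) by (auto simp: S_def nm)
        obtain \<phi> where phi: "bij_betw \<phi> (cube m) A"
          "unif_prob (cube m) (\<lambda>x. hamming x (take m (\<phi> x)) \<le> 1) \<ge> 1 - real (card {x \<in> cube m. remD t A x}) / 2 ^ m"
          using matching[OF AS tm] by blast
        have "real (card {x \<in> cube m. remD t A x}) / 2 ^ m = 2 ^ t * (\<Sum>s\<in>cube (m - t). Yv t s A) / 2 ^ m"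
          by (simp add: card_bad_sum[OF tm])
        also have "\<dots> \<le> 2 ^ t * a / 2 ^ m"
          using that(2) by (intro divide_right_mono mult_left_mono) auto
        also have "\<dots> = 4 / (real t + 4)"
        proof -
          have Bp: "real B > 0" by (simp add: B_def)
          have "2 ^ t * a / 2 ^ m = (2 ^ t * real B) * 4 / ((2 ^ t * real B) * (real t + 4))"
            unfolding a_def Bt[symmetric] using Bt by (simp add: field_simps)
          also have "\<dots> = 4 / (real t + 4)" using Bp by simp
          finally show ?thesis .
        qed
        also have "\<dots> \<le> C / real n"
        proof -
          have "4 * real n \<le> 8 * (real t + 4)" using t2 by linarith
          also have "\<dots> \<le> C * (real t + 4)" using C8 by (intro mult_right_mono) auto
          finally have "4 * real n \<le> C * (real t + 4)" .
          then show ?thesis using nm by (simp add: divide_simps)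
        qed
        finally have "1 - C / real n \<le> unif_prob (cube m) (\<lambda>x. hamming x (take m (\<phi> x)) \<le> 1)"
          using phi(2) by linarith
        then show ?thesis unfolding good_matching_def nm using phi(1) by auto
      qed
      define Bad where "Bad = {A \<in> S. \<not> good_matching C n A}"
      have BadSub: "Bad \<subseteq> {A \<in> Pow (cube (Suc m)). a \<le> (\<Sum>s\<in>cube (m - t). Yv t s A)}"
        using good by (auto simp: Bad_def S_def nm)
      have cBad: "real (card Bad) \<le> 2 ^ card (cube (Suc m)) * exp (d t * 2 ^ (m - t) - a / 2)"
      proof -
        have "card Bad \<le> card {A \<in> Pow (cube (Suc m)). a \<le> (\<Sum>s\<in>cube (m - t). Yv t s A)}"
          by (rule card_mono[OF _ BadSub]) simp
        then show ?thesis using chernoff[OF tm, of a] by linarith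
      qed
      have dB: "d t * 2 ^ (m - t) - a / 2 \<le> - (real B / (real t + 4))"
      proof -
        have "d t * real B \<le> real B / (real t + 4)"
        proof -
          have "d t \<le> 1 / (real t + 4)" using d_bounds[of t] by simp
          then have "d t * real B \<le> 1 / (real t + 4) * real B" by (intro mult_right_mono) auto
          then show ?thesis by simp
        qed
        moreover have "a / 2 = 2 * (real B / (real t + 4))"
        proof -
          have p: "real t + 4 > 0" by simp
          show ?thesis unfolding a_def using p by (simp add: field_simps)
        qed
        moreover have "(2::real) ^ (m - t) = real B" by (simp add: B_def)
        ultimately show ?thesis by (simp only:)
      qed
      have cBad2: "real (card Bad) \<le> 2 ^ 2 ^ n * exp (- (real B / (real t + 4)))"
        using cBad dB by (smt (verit) card_cube exp_le_cancel_iff mult_left_mono nm zero_le_power)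
      have cS2: "(2::real) ^ 2 ^ n \<le> (2 ^ n + 1) * real (card S)"
      proof -
        have "(2::nat) ^ n div 2 = 2 ^ (n - 1)" using nm by simp
        then show ?thesis using central_binom[of "2 ^ n"] unfolding cardS by (simp add: add.commute)
      qed
      have split: "unif_prob S (good_matching C n) = 1 - real (card Bad) / real (card S)"
      proof -
        have "card {A \<in> S. good_matching C n A} + card Bad = card S"
          unfolding Bad_def using finS by (subst card_Un_disjoint[symmetric]) (auto intro: arg_cong[where f = card])
        then show ?thesis using Spos unfolding unif_prob_def by (simp add: field_simps)
      qed
      have "real (card Bad) / real (card S) \<le> (2 ^ n + 1) * exp (- (real B / (real t + 4)))"
      proof -
        have "real (card Bad) \<le> (2 ^ n + 1) * real (card S) * exp (- (real B / (real t + 4)))"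
          using cBad2 cS2 by (smt (verit) exp_gt_zero mult_right_mono)
        then show ?thesis using Spos by (simp add: divide_simps mult.commute mult.left_commute)
      qed
      also have "\<dots> \<le> (2 powr real n + 1) * exp (- (2 powr ((real n - 1)/2) / (real n + 4)))"
      proof -
        have "2 powr ((real n - 1) / 2) \<le> real B"
        proof -
          have "m \<le> 2 * (m - m div 2)" by presburger
          then have "real m \<le> real (2 * (m - m div 2))" by (simp only: of_nat_le_iff)
          then have "(real n - 1) / 2 \<le> real (m - t)" unfolding nm t_def by simp
          then have "2 powr ((real n - 1) / 2) \<le> 2 powr real (m - t)" by simp
          then show ?thesis by (simp add: B_def powr_realpow)
        qed
        moreover have "real t + 4 \<le> real n + 4" using nm tm by simp
        ultimately have "2 powr ((real n - 1)/2) / (real n + 4) \<le> real B / (real t + 4)"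
          by (intro frac_le) auto
        then have "exp (- (real B / (real t + 4))) \<le> exp (- (2 powr ((real n - 1)/2) / (real n + 4)))"
          by simp
        then have "(2 ^ n + 1) * exp (- (real B / (real t + 4))) \<le> (2 ^ n + 1) * exp (- (2 powr ((real n - 1)/2) / (real n + 4)))"
          by (intro mult_left_mono) auto
        then show ?thesis by (simp add: powr_realpow)
      qed
      also have "\<dots> \<le> 2 powr (-(2 powr (real n / 4)))"
        using N0[of "real n"] nC CN0 by simp
      finally show ?thesis unfolding split by (simp add: mult.commute)
    qed
  qed
qed


end
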